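(* Let $k\ge 2$ be an integer and let $G$ be a graph of order $n$ with $\delta(G)\ge k$. Then $\mathrm{TC}_k(G)\le n-k+1$, with equality if and only if $G\cong K_k\vee G'$ for some graph $G'$ of order $n-k$.
   Context: All graphs are finite, simple and connected. $N(v)$ denotes the open neighborhood of $v$. For a graph $G$ with $\delta(G)\ge k$, a set $S\subseteq V(G)$ is a total $k$-dominating set if $|N(v)\cap S|\ge k$ for every $v\in V(G)$. Two disjoint sets $U,W\subseteq V(G)$ form a total $k$-coalition if neither is a total $k$-dominating set but $U\cup W$ is. A total $k$-coalition partition of $G$ is a partition $\Omega$ of $V(G)$ in which every set forms a total $k$-coalition with some other set of $\Omega$; $\mathrm{TC}_k(G)$ is the maximum cardinality of such a partition. $K_k\vee G'$ denotes the join of the complete graph $K_k$ and $G'$ (disjoint union plus all edges between them). *)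

theory Defs
  imports Main "HOL-Library.Disjoint_Sets"
begin

definition simple_graph :: "'a set \<Rightarrow> ('a \<Rightarrow> 'a \<Rightarrow> bool) \<Rightarrow> bool" where
  "simple_graph V E \<longleftrightarrow> finite V \<and> V \<noteq> {} \<and>
     (\<forall>x y. E x y \<longrightarrow> x \<in> V \<and> y \<in> V) \<and>
     (\<forall>x y. E x y \<longrightarrow> E y x) \<and> (\<forall>x. \<not> E x x)"

definition connected_graph :: "'a set \<Rightarrow> ('a \<Rightarrow> 'a \<Rightarrow> bool) \<Rightarrow> bool" where
  "connected_graph V E \<longleftrightarrow> (\<forall>u\<in>V. \<forall>v\<in>V. E\<^sup>*\<^sup>* u v)"

definition graph :: "'a set \<Rightarrow> ('a \<Rightarrow> 'a \<Rightarrow> bool) \<Rightarrow> bool" where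
  "graph V E \<longleftrightarrow> simple_graph V E \<and> connected_graph V E"

definition nbhd :: "'a set \<Rightarrow> ('a \<Rightarrow> 'a \<Rightarrow> bool) \<Rightarrow> 'a \<Rightarrow> 'a set" where
  "nbhd V E v = {u \<in> V. E v u}"

definition min_degree_ge :: "'a set \<Rightarrow> ('a \<Rightarrow> 'a \<Rightarrow> bool) \<Rightarrow> nat \<Rightarrow> bool" where
  "min_degree_ge V E k \<longleftrightarrow> (\<forall>v\<in>V. k \<le> card (nbhd V E v))"

definition total_k_dom :: "nat \<Rightarrow> 'a set \<Rightarrow> ('a \<Rightarrow> 'a \<Rightarrow> bool) \<Rightarrow> 'a set \<Rightarrow> bool" where
  "total_k_dom k V E S \<longleftrightarrow> S \<subseteq> V \<and> (\<forall>v\<in>V. k \<le> card (nbhd V E v \<inter> S))"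

definition total_k_coalition :: "nat \<Rightarrow> 'a set \<Rightarrow> ('a \<Rightarrow> 'a \<Rightarrow> bool) \<Rightarrow> 'a set \<Rightarrow> 'a set \<Rightarrow> bool" where
  "total_k_coalition k V E U W \<longleftrightarrow> U \<subseteq> V \<and> W \<subseteq> V \<and> U \<inter> W = {} \<and>
     \<not> total_k_dom k V E U \<and> \<not> total_k_dom k V E W \<and> total_k_dom k V E (U \<union> W)"

definition total_k_coalition_partition :: "nat \<Rightarrow> 'a set \<Rightarrow> ('a \<Rightarrow> 'a \<Rightarrow> bool) \<Rightarrow> 'a set set \<Rightarrow> bool" where
  "total_k_coalition_partition k V E \<Omega> \<longleftrightarrow> partition_on V \<Omega> \<and>
     (\<forall>U\<in>\<Omega>. \<exists>W\<in>\<Omega>. W \<noteq> U \<and> total_k_coalition k V E U W)"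

text \<open>TC_k(G): maximum cardinality of a total k-coalition partition (0 if none exists).\<close>
definition TC :: "nat \<Rightarrow> 'a set \<Rightarrow> ('a \<Rightarrow> 'a \<Rightarrow> bool) \<Rightarrow> nat" where
  "TC k V E = Sup {card \<Omega> | \<Omega>. total_k_coalition_partition k V E \<Omega>}"

definition graph_iso :: "'a set \<Rightarrow> ('a \<Rightarrow> 'a \<Rightarrow> bool) \<Rightarrow> 'b set \<Rightarrow> ('b \<Rightarrow> 'b \<Rightarrow> bool) \<Rightarrow> bool" where
  "graph_iso V1 E1 V2 E2 \<longleftrightarrow> (\<exists>f. bij_betw f V1 V2 \<and>
     (\<forall>x\<in>V1. \<forall>y\<in>V1. E1 x y \<longleftrightarrow> E2 (f x) (f y)))"

text \<open>Join K_k \<or> G': K_k on vertices Inl 0..k-1, G' on Inr ` V'.\<close>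
definition join_vertices :: "nat \<Rightarrow> 'a set \<Rightarrow> (nat + 'a) set" where
  "join_vertices k V' = Inl ` {..<k} \<union> Inr ` V'"

fun join_edges :: "nat \<Rightarrow> ('a \<Rightarrow> 'a \<Rightarrow> bool) \<Rightarrow> (nat + 'a) \<Rightarrow> (nat + 'a) \<Rightarrow> bool" where
  "join_edges k E' (Inl i) (Inl j) = (i < k \<and> j < k \<and> i \<noteq> j)"
| "join_edges k E' (Inl i) (Inr y) = (i < k)"
| "join_edges k E' (Inr x) (Inl j) = (j < k)"
| "join_edges k E' (Inr x) (Inr y) = E' x y"

end

theory Submission
  imports Defs
begin

definition core :: "'a set \<Rightarrow> ('a \<Rightarrow> 'a \<Rightarrow> bool) \<Rightarrow> nat \<Rightarrow> 'a set \<Rightarrow> bool" where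
  "core V E k K \<longleftrightarrow> K \<subseteq> V \<and> card K = k \<and> (\<forall>v\<in>K. \<forall>u\<in>V. u \<noteq> v \<longrightarrow> E v u)"

lemma excess:
  assumes "partition_on V \<Omega>" "finite V"
  shows "(\<Sum>A\<in>\<Omega>. card A - 1) + card \<Omega> = card V"
proof -
  have fin: "finite \<Omega>" using assms finite_elements by blast
  have fA: "\<forall>A\<in>\<Omega>. finite A \<and> A \<noteq> {}" using assms
    by (metis Union_upper finite_subset partition_onD1 partition_onD3)
  have "(\<Sum>A\<in>\<Omega>. card A - 1 + 1) = (\<Sum>A\<in>\<Omega>. card A - 1) + (\<Sum>A\<in>\<Omega>. 1)"
    by (rule sum.distrib)
  hence "(\<Sum>A\<in>\<Omega>. card A - 1) + card \<Omega> = (\<Sum>A\<in>\<Omega>. card A - 1 + 1)"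
    by simp
  also have "\<dots> = (\<Sum>A\<in>\<Omega>. card A)"
  proof (rule sum.cong[OF refl])
    fix A assume "A \<in> \<Omega>"
    hence "card A > 0" using fA card_gt_0_iff by blast
    thus "card A - 1 + 1 = card A" by simp
  qed
  also have "\<dots> = card (\<Union>\<Omega>)"
    by (rule card_Union_disjoint[symmetric]) (use assms fA in \<open>auto simp: partition_on_def disjoint_def pairwise_def disjnt_def\<close>)
  also have "\<dots> = card V" using assms partition_onD1 by metis
  finally show ?thesis .
qed

lemma excess_sub:
  assumes "partition_on V \<Omega>" "finite V" "S \<subseteq> \<Omega>"
  shows "(\<Sum>A\<in>S. card A - 1) + card \<Omega> \<le> card V"
proof -
  have fin: "finite \<Omega>" using assms finite_elements by blast
  have "(\<Sum>A\<in>S. card A - 1) \<le> (\<Sum>A\<in>\<Omega>. card A - 1)"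
    by (rule sum_mono2) (use fin assms in auto)
  thus ?thesis using excess[OF assms(1,2)] by linarith
qed

lemma excess_pair:
  assumes "partition_on V \<Omega>" "finite V" "U \<in> \<Omega>" "W \<in> \<Omega>" "U \<noteq> W"
  shows "(card U - 1) + (card W - 1) + card \<Omega> \<le> card V"
  using excess_sub[OF assms(1,2), of "{U,W}"] assms by simp

lemma excess_triple:
  assumes "partition_on V \<Omega>" "finite V" "U \<in> \<Omega>" "W \<in> \<Omega>" "A \<in> \<Omega>" "U \<noteq> W" "A \<noteq> U" "A \<noteq> W"
  shows "(card U - 1) + (card W - 1) + (card A - 1) + card \<Omega> \<le> card V"
  using excess_sub[OF assms(1,2), of "{U,W,A}"] assms by simp

lemma part_elem:
  assumes "partition_on V \<Omega>" "finite V" "A \<in> \<Omega>"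
  shows "A \<subseteq> V" "A \<noteq> {}" "finite A" "card A \<ge> 1"
proof -
  show "A \<subseteq> V" using assms by (metis Union_upper partition_onD1)
  thus "finite A" using assms finite_subset by blast
  show "A \<noteq> {}" using assms partition_onD3 by blast
  thus "card A \<ge> 1" using \<open>finite A\<close> by (simp add: Suc_le_eq card_gt_0_iff)
qed

lemma nbhd_sub: "nbhd V E v \<inter> S \<subseteq> S - {v}" if "simple_graph V E"
  using that by (auto simp: nbhd_def simple_graph_def)

lemma dom_card:
  assumes "simple_graph V E" "total_k_dom k V E S" "S \<noteq> {}"
  shows "k + 1 \<le> card S"
proof -
  obtain v where v: "v \<in> S" using assms by blast
  have SV: "S \<subseteq> V" "finite V" using assms(1,2) unfolding total_k_dom_def simple_graph_def by blast+
  hence fS: "finite S" using finite_subset by blast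
  have "k \<le> card (nbhd V E v \<inter> S)" using assms(2) v SV unfolding total_k_dom_def by blast
  also have "\<dots> \<le> card (S - {v})" by (rule card_mono) (use fS nbhd_sub[OF assms(1)] in auto)
  also have "\<dots> = card S - 1" using v fS by simp
  finally have "k \<le> card S - 1" .
  moreover have "card S > 0" using v fS card_gt_0_iff by blast
  ultimately show ?thesis by linarith
qed

lemma n_ge:
  assumes "simple_graph V E" "min_degree_ge V E k"
  shows "k + 1 \<le> card V"
proof -
  obtain v where v: "v \<in> V" using assms(1) unfolding simple_graph_def by blast
  have fV: "finite V" using assms(1) unfolding simple_graph_def by blast
  have "k \<le> card (nbhd V E v)" using assms(2) v unfolding min_degree_ge_def by blast
  also have "\<dots> \<le> card (V - {v})"
  proof (rule card_mono)
    show "finite (V - {v})" using fV by simp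
    show "nbhd V E v \<subseteq> V - {v}" using assms(1) unfolding nbhd_def simple_graph_def by blast
  qed
  also have "\<dots> = card V - 1" using v fV by simp
  finally have "k \<le> card V - 1" .
  moreover have "card V > 0" using v fV card_gt_0_iff by blast
  ultimately show ?thesis by linarith
qed

lemma bound:
  assumes "simple_graph V E" "1 \<le> k" "total_k_coalition_partition k V E \<Omega>"
  shows "card \<Omega> + k \<le> card V + 1"
proof (cases "\<Omega> = {}")
  case True
  have "partition_on V \<Omega>" using assms(3) by (auto simp: total_k_coalition_partition_def)
  hence "V = {}" using True partition_onD1 by fastforce
  then show ?thesis using assms(1) by (simp add: simple_graph_def)
next
  case False
  have fV: "finite V" using assms by (auto simp: simple_graph_def)
  have P: "partition_on V \<Omega>" using assms(3) by (auto simp: total_k_coalition_partition_def)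
  obtain U where U: "U \<in> \<Omega>" using False by blast
  then obtain W where W: "W \<in> \<Omega>" "W \<noteq> U" "total_k_coalition k V E U W"
    using assms(3) by (auto simp: total_k_coalition_partition_def)
  have "k + 1 \<le> card (U \<union> W)"
    by (rule dom_card[OF assms(1)]) (use W part_elem[OF P fV U] in \<open>auto simp: total_k_coalition_def\<close>)
  also have "\<dots> \<le> card U + card W" by (rule card_Un_le)
  finally have "k + 1 \<le> card U + card W" .
  moreover have "(card U - 1) + (card W - 1) + card \<Omega> \<le> card V"
    using excess_pair[OF P fV U W(1)] W(2) by auto
  moreover have "card U \<ge> 1" "card W \<ge> 1" using part_elem[OF P fV] U W by auto
  ultimately show ?thesis by linarith
qed

lemma eq_core:
  assumes "simple_graph V E" "2 \<le> k" "min_degree_ge V E k" "total_k_coalition_partition k V E \<Omega>"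
    "card \<Omega> + k = card V + 1"
  shows "\<exists>K. core V E k K"
proof -
  have fV: "finite V" using assms by (auto simp: simple_graph_def)
  have nk: "k + 1 \<le> card V" using n_ge assms by blast
  have P: "partition_on V \<Omega>" using assms(4) by (auto simp: total_k_coalition_partition_def)
  note pe = part_elem[OF P fV]
  have partner: "\<exists>W\<in>\<Omega>. W \<noteq> U \<and> total_k_coalition k V E U W" if "U \<in> \<Omega>" for U
    using assms(4) that by (auto simp: total_k_coalition_partition_def)
  have uc: "k + 1 \<le> card U + card W" if "U \<in> \<Omega>" "total_k_coalition k V E U W" "W \<in> \<Omega>" for U W
  proof -
    have "k + 1 \<le> card (U \<union> W)"
      by (rule dom_card[OF assms(1)]) (use that pe in \<open>auto simp: total_k_coalition_def\<close>)
    also have "\<dots> \<le> card U + card W" by (rule card_Un_le)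
    finally show ?thesis .
  qed
  show ?thesis
  proof (cases "\<exists>x. {x} \<in> \<Omega>")
    case True
    then obtain x where x: "{x} \<in> \<Omega>" by blast
    then obtain B where B: "B \<in> \<Omega>" "B \<noteq> {x}" "total_k_coalition k V E {x} B" using partner by blast
    have cB1: "k \<le> card B" using uc[OF x B(3) B(1)] by simp
    have "(card B - 1) + (card {x} - 1) + card \<Omega> \<le> card V" using excess_pair[OF P fV B(1) x B(2)] .
    hence cB: "card B = k" using cB1 assms(5) by simp
    have single: "card A = 1" if "A \<in> \<Omega>" "A \<noteq> B" for A
      using excess_pair[OF P fV B(1) that(1)] that cB assms(5) pe(4)[OF that(1)] by auto
    have BV: "B \<subseteq> V" using pe B by auto
    have key: "(B \<union> {y}) - {v} \<subseteq> nbhd V E v" if y: "y \<in> V - B" and v: "v \<in> B" for y v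
    proof -
      obtain A where A: "A \<in> \<Omega>" "y \<in> A" using y P by (metis Diff_iff UnionE partition_onD1)
      have "A \<noteq> B" using A y by auto
      hence "card A = 1" using single A by auto
      hence Ay: "A = {y}" using A by (metis card_1_singletonE singletonD)
      obtain W where W: "W \<in> \<Omega>" "W \<noteq> A" "total_k_coalition k V E A W" using partner A(1) by blast
      have "k \<le> card W" using uc[OF A(1) W(3) W(1)] Ay by simp
      hence "W = B" using single[OF W(1)] assms(2) by auto
      hence D: "total_k_dom k V E (B \<union> {y})" using W(3) Ay by (auto simp: total_k_coalition_def Un_commute)
      have fB: "finite (B \<union> {y})" using BV fV finite_subset by auto
      have "nbhd V E v \<inter> (B \<union> {y}) = (B \<union> {y}) - {v}"
      proof (rule card_subset_eq)
        show "finite (B \<union> {y} - {v})" using fB by simp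
        show "nbhd V E v \<inter> (B \<union> {y}) \<subseteq> B \<union> {y} - {v}" using nbhd_sub[OF assms(1)] .
        have "card (B \<union> {y} - {v}) = k" using cB y v fB by (simp add: card_insert_if)
        also have "k \<le> card (nbhd V E v \<inter> (B \<union> {y}))" using D v BV by (auto simp: total_k_dom_def)
        finally show "card (nbhd V E v \<inter> (B \<union> {y})) = card (B \<union> {y} - {v})"
          using card_mono[OF \<open>finite (B \<union> {y} - {v})\<close> \<open>nbhd V E v \<inter> (B \<union> {y}) \<subseteq> B \<union> {y} - {v}\<close>] 
          \<open>card (B \<union> {y} - {v}) = k\<close> by linarith
      qed
      thus ?thesis by blast
    qed
    have "card B < card V" using cB nk by simp
    have "V - B \<noteq> {}"
    proof
      assume "V - B = {}"
      hence "V \<subseteq> B" by blast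
      hence "card V \<le> card B" using card_mono[OF finite_subset[OF BV fV]] by blast
      thus False using \<open>card B < card V\<close> by simp
    qed
    then obtain y0 where y0: "y0 \<in> V - B" by blast
    have "core V E k B"
      unfolding core_def
    proof (intro conjI BV cB ballI impI)
      fix v u assume v: "v \<in> B" and u: "u \<in> V" and uv: "u \<noteq> v"
      show "E v u"
      proof (cases "u \<in> B")
        case True
        thus ?thesis using key[OF y0 v] uv by (auto simp: nbhd_def)
      next
        case False
        thus ?thesis using key[of u v] u v by (auto simp: nbhd_def)
      qed
    qed
    thus ?thesis by blast
  next
    case False
    have ns: "card A \<ge> 2" if "A \<in> \<Omega>" for A
    proof (rule ccontr)
      assume "\<not> 2 \<le> card A"
      hence "card A = 1" using pe(4)[OF that] by simp
      then obtain x where "A = {x}" by (metis card_1_singletonE)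
      thus False using False that by blast
    qed
    have "\<Omega> \<noteq> {}"
    proof
      assume "\<Omega> = {}"
      hence "V = {}" using P partition_onD1 by fastforce
      thus False using nk by simp
    qed
    then obtain U where U: "U \<in> \<Omega>" by blast
    then obtain W where W: "W \<in> \<Omega>" "W \<noteq> U" "total_k_coalition k V E U W" using partner by blast
    have c1: "k + 1 \<le> card U + card W" using uc[OF U W(3) W(1)] .
    have sub: "\<Omega> \<subseteq> {U, W}"
    proof
      fix A assume A: "A \<in> \<Omega>"
      show "A \<in> {U, W}"
      proof (rule ccontr)
        assume "A \<notin> {U, W}"
        hence "(card U - 1) + (card W - 1) + (card A - 1) + card \<Omega> \<le> card V"
          using excess_triple[OF P fV U W(1) A] W(2) by auto
        thus False using ns[OF A] c1 assms(5) pe(4)[OF U] pe(4)[OF W(1)] by linarith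
      qed
    qed
    have "card {U, W} = 2" using W(2) by simp
    hence "card \<Omega> \<le> 2" using card_mono[OF _ sub] by simp
    hence nV: "card V = k + 1" using assms(5) nk by linarith
    obtain w where w: "w \<in> V" using assms(1) by (auto simp: simple_graph_def)
    have comp: "nbhd V E v = V - {v}" if v: "v \<in> V" for v
    proof (rule card_subset_eq)
      show "finite (V - {v})" using fV by simp
      show "nbhd V E v \<subseteq> V - {v}" using assms(1) by (auto simp: nbhd_def simple_graph_def)
      have "k \<le> card (nbhd V E v)" using assms(3) v by (auto simp: min_degree_ge_def)
      moreover have "card (V - {v}) = k" using nV v fV by simp
      ultimately show "card (nbhd V E v) = card (V - {v})"
        using card_mono[OF \<open>finite (V - {v})\<close> \<open>nbhd V E v \<subseteq> V - {v}\<close>] by linarith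
    qed
    have "core V E k (V - {w})"
      unfolding core_def
    proof (intro conjI ballI impI)
      show "V - {w} \<subseteq> V" by blast
      show "card (V - {w}) = k" using nV w fV by simp
      fix v u assume v: "v \<in> V - {w}" and u: "u \<in> V" and uv: "u \<noteq> v"
      have "u \<in> nbhd V E v" using comp[of v] v u uv by blast
      thus "E v u" by (simp add: nbhd_def)
    qed
    thus ?thesis by blast
  qed
qed


lemma core_coal:
  assumes "simple_graph V E" "2 \<le> k" "core V E k K" "x \<in> V - K"
  shows "total_k_coalition k V E K {x}"
proof -
  have fV: "finite V" using assms by (auto simp: simple_graph_def)
  have KV: "K \<subseteq> V" and cK: "card K = k" and adj: "\<And>v u. v \<in> K \<Longrightarrow> u \<in> V \<Longrightarrow> u \<noteq> v \<Longrightarrow> E v u"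
    using assms(3) by (auto simp: core_def)
  have fK: "finite K" using KV fV finite_subset by blast
  have sym: "\<And>a b. E a b \<Longrightarrow> E b a" using assms(1) by (auto simp: simple_graph_def)
  have "K \<noteq> {}" using cK assms(2) by auto
  then obtain v0 where v0: "v0 \<in> K" by blast
  have nK: "\<not> total_k_dom k V E K"
  proof
    assume "total_k_dom k V E K"
    hence "k \<le> card (nbhd V E v0 \<inter> K)" using v0 KV by (auto simp: total_k_dom_def)
    also have "\<dots> \<le> card (K - {v0})" by (rule card_mono) (use fK nbhd_sub[OF assms(1)] in auto)
    also have "\<dots> = k - 1" using v0 fK cK by simp
    finally show False using assms(2) by simp
  qed
  have nx: "\<not> total_k_dom k V E {x}"
  proof
    assume "total_k_dom k V E {x}"
    hence "k \<le> card (nbhd V E x \<inter> {x})" using assms(4) by (auto simp: total_k_dom_def)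
    also have "\<dots> \<le> card {x}" by (rule card_mono) auto
    finally show False using assms(2) by simp
  qed
  have D: "total_k_dom k V E (K \<union> {x})"
    unfolding total_k_dom_def
  proof (intro conjI ballI)
    show "K \<union> {x} \<subseteq> V" using KV assms(4) by blast
    fix v assume v: "v \<in> V"
    show "k \<le> card (nbhd V E v \<inter> (K \<union> {x}))"
    proof (cases "v \<in> K")
      case True
      have "(K \<union> {x}) - {v} \<subseteq> nbhd V E v \<inter> (K \<union> {x})"
        using adj[OF True] KV assms(4) by (auto simp: nbhd_def)
      moreover have "card ((K \<union> {x}) - {v}) = k" using True assms(4) fK cK by (simp add: card_insert_if)
      ultimately show ?thesis using card_mono[of "nbhd V E v \<inter> (K \<union> {x})"] fK by (metis finite_Int finite_Un finite.emptyI finite.insertI)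
    next
      case False
      have "K \<subseteq> nbhd V E v \<inter> (K \<union> {x})"
      proof
        fix u assume u: "u \<in> K"
        have "u \<noteq> v" using u False by blast
        hence "E u v" using adj[OF u v] by blast
        hence "E v u" using sym by blast
        thus "u \<in> nbhd V E v \<inter> (K \<union> {x})" using u KV by (auto simp: nbhd_def)
      qed
      thus ?thesis using card_mono[of "nbhd V E v \<inter> (K \<union> {x})"] fK cK by (metis finite_Int finite_Un finite.emptyI finite.insertI)
    qed
  qed
  show ?thesis unfolding total_k_coalition_def using KV assms(4) nK nx D by auto
qed

lemma core_part:
  assumes "simple_graph V E" "2 \<le> k" "core V E k K" "k < card V"
  shows "\<exists>\<Omega>. total_k_coalition_partition k V E \<Omega> \<and> card \<Omega> + k = card V + 1"
proof -
  have fV: "finite V" using assms by (auto simp: simple_graph_def)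
  have KV: "K \<subseteq> V" and cK: "card K = k" using assms(3) by (auto simp: core_def)
  have fK: "finite K" using KV fV finite_subset by blast
  define \<Omega> where "\<Omega> = insert K ((\<lambda>x. {x}) ` (V - K))"
  have Kn: "K \<notin> (\<lambda>x. {x}) ` (V - K)" using cK assms(2) by auto
  have "card \<Omega> = Suc (card (V - K))"
    unfolding \<Omega>_def using Kn fV by (simp add: card_image inj_on_def)
  also have "card (V - K) = card V - k" using KV fK cK by (simp add: card_Diff_subset)
  finally have c: "card \<Omega> + k = card V + 1" using assms(4) by simp
  have "K \<noteq> {}" using cK assms(2) by auto
  hence P: "partition_on V \<Omega>" unfolding \<Omega>_def partition_on_def disjoint_def using KV by auto
  have ne: "V - K \<noteq> {}" using assms(4) cK KV card_mono[OF fK] by (metis Diff_eq_empty_iff not_le)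
  then obtain x0 where x0: "x0 \<in> V - K" by blast
  have "total_k_coalition_partition k V E \<Omega>"
    unfolding total_k_coalition_partition_def
  proof (intro conjI P ballI)
    fix U assume "U \<in> \<Omega>"
    then consider "U = K" | x where "x \<in> V - K" "U = {x}" unfolding \<Omega>_def by blast
    thus "\<exists>W\<in>\<Omega>. W \<noteq> U \<and> total_k_coalition k V E U W"
    proof cases
      case 1
      show ?thesis using core_coal[OF assms(1-3) x0] 1 Kn x0 unfolding \<Omega>_def by auto
    next
      case (2 x)
      have "total_k_coalition k V E {x} K" using core_coal[OF assms(1-3) 2(1)]
        by (auto simp: total_k_coalition_def Un_commute)
      thus ?thesis using 2 Kn unfolding \<Omega>_def by auto
    qed
  qed
  thus ?thesis using c by blast
qed

lemma core_iso:
  fixes V :: "'a set"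
  assumes "simple_graph V E" "core V E k K" "k < card V"
  shows "\<exists>(V' :: 'a set) E'. simple_graph V' E' \<and> card V' = card V - k \<and>
         graph_iso V E (join_vertices k V') (join_edges k E')"
proof -
  have fV: "finite V" using assms by (auto simp: simple_graph_def)
  have KV: "K \<subseteq> V" and cK: "card K = k" and adj: "\<And>v u. v \<in> K \<Longrightarrow> u \<in> V \<Longrightarrow> u \<noteq> v \<Longrightarrow> E v u"
    using assms(2) by (auto simp: core_def)
  have fK: "finite K" using KV fV finite_subset by blast
  have inV: "\<And>a b. E a b \<Longrightarrow> a \<in> V \<and> b \<in> V" and sym: "\<And>a b. E a b \<Longrightarrow> E b a"
    and irr: "\<And>a. \<not> E a a" using assms(1) by (auto simp: simple_graph_def)
  define V' where "V' = V - K"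
  define E' where "E' = (\<lambda>x y. E x y \<and> x \<in> V' \<and> y \<in> V')"
  have ne: "V' \<noteq> {}" unfolding V'_def using assms(3) cK KV card_mono[OF fK] by (metis Diff_eq_empty_iff not_le)
  have sg: "simple_graph V' E'" unfolding simple_graph_def E'_def V'_def
    using fV ne sym irr unfolding V'_def by auto
  have cV': "card V' = card V - k" unfolding V'_def using KV fK cK by (simp add: card_Diff_subset)
  obtain h where h: "bij_betw h {0..<k} K" using ex_bij_betw_nat_finite[OF fK] cK by blast
  define g where "g = inv_into {0..<k} h"
  have g: "bij_betw g K {..<k}" unfolding g_def using bij_betw_inv_into[OF h] by (simp add: atLeast0LessThan)
  define f where "f = (\<lambda>v. if v \<in> K then Inl (g v) else Inr v)"
  have inj: "inj_on f V"
    unfolding inj_on_def f_def using g by (auto simp: bij_betw_def inj_on_def)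
  have img: "f ` V = join_vertices k V'"
  proof
    show "f ` V \<subseteq> join_vertices k V'"
      unfolding join_vertices_def f_def V'_def using g by (auto simp: bij_betw_def)
    show "join_vertices k V' \<subseteq> f ` V"
    proof
      fix z assume "z \<in> join_vertices k V'"
      then consider i where "i < k" "z = Inl i" | y where "y \<in> V'" "z = Inr y"
        unfolding join_vertices_def by auto
      thus "z \<in> f ` V"
      proof cases
        case 1
        then obtain v where "v \<in> K" "g v = i" using g by (metis bij_betw_def imageE lessThan_iff)
        thus ?thesis using 1 KV unfolding f_def by force
      next
        case 2
        thus ?thesis unfolding f_def V'_def by force
      qed
    qed
  qed
  have gk: "\<And>v. v \<in> K \<Longrightarrow> g v < k" using g by (auto simp: bij_betw_def)
  have ginj: "\<And>v w. v \<in> K \<Longrightarrow> w \<in> K \<Longrightarrow> g v = g w \<Longrightarrow> v = w" using g by (auto simp: bij_betw_def inj_on_def)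
  have edge: "\<forall>x\<in>V. \<forall>y\<in>V. E x y \<longleftrightarrow> join_edges k E' (f x) (f y)"
  proof (intro ballI)
    fix x y assume x: "x \<in> V" and y: "y \<in> V"
    show "E x y \<longleftrightarrow> join_edges k E' (f x) (f y)"
    proof (cases "x \<in> K"; cases "y \<in> K")
      assume a: "x \<in> K" "y \<in> K"
      have "E x y \<longleftrightarrow> x \<noteq> y" using adj[OF a(1) y] irr by auto
      thus ?thesis using a gk ginj unfolding f_def by auto
    next
      assume a: "x \<in> K" "y \<notin> K"
      thus ?thesis using adj[OF a(1) y] gk unfolding f_def by auto
    next
      assume a: "x \<notin> K" "y \<in> K"
      thus ?thesis using adj[OF a(2) x] sym gk unfolding f_def by auto
    next
      assume a: "x \<notin> K" "y \<notin> K"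
      thus ?thesis using x y unfolding f_def E'_def V'_def by auto
    qed
  qed
  have "graph_iso V E (join_vertices k V') (join_edges k E')"
    unfolding graph_iso_def bij_betw_def using inj img edge by blast
  thus ?thesis using sg cV' by blast
qed

lemma iso_core:
  fixes V :: "'a set" and V' :: "'b set"
  assumes "graph_iso V E (join_vertices k V') (join_edges k E')"
  shows "\<exists>K. core V E k K"
proof -
  obtain f where bij: "bij_betw f V (join_vertices k V')"
    and edge: "\<forall>x\<in>V. \<forall>y\<in>V. E x y \<longleftrightarrow> join_edges k E' (f x) (f y)"
    using assms unfolding graph_iso_def by blast
  define K where "K = {v \<in> V. f v \<in> Inl ` {..<k}}"
  have img: "f ` K = Inl ` {..<k}"
  proof
    show "f ` K \<subseteq> Inl ` {..<k}" unfolding K_def by auto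
    show "Inl ` {..<k} \<subseteq> f ` K"
    proof
      fix z :: "nat + 'b" assume z: "z \<in> Inl ` {..<k}"
      hence "z \<in> f ` V" using bij unfolding bij_betw_def join_vertices_def by auto
      thus "z \<in> f ` K" using z unfolding K_def by auto
    qed
  qed
  have injK: "inj_on f K" using bij unfolding bij_betw_def K_def by (auto intro: inj_on_subset)
  have "card K = card (Inl ` {..<k} :: (nat + 'b) set)" using card_image[OF injK] img by simp
  also have "\<dots> = k" by (simp add: card_image)
  finally have cK: "card K = k" .
  have "\<forall>v\<in>K. \<forall>u\<in>V. u \<noteq> v \<longrightarrow> E v u"
  proof (intro ballI impI)
    fix v u assume v: "v \<in> K" and u: "u \<in> V" and uv: "u \<noteq> v"
    obtain i where i: "i < k" "f v = Inl i" using v unfolding K_def by auto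
    have vV: "v \<in> V" using v unfolding K_def by auto
    have ne: "f u \<noteq> f v" using bij uv u vV unfolding bij_betw_def inj_on_def by blast
    have fu: "f u \<in> join_vertices k V'" using bij u unfolding bij_betw_def by auto
    have "join_edges k E' (f v) (f u)"
    proof (cases "f u")
      case (Inl j)
      thus ?thesis using fu i ne unfolding join_vertices_def by auto
    next
      case (Inr y)
      thus ?thesis using i by simp
    qed
    thus "E v u" using edge vV u by blast
  qed
  hence "core V E k K" unfolding core_def K_def using cK unfolding K_def by auto
  thus ?thesis by blast
qed

theorem proposition3p2:
  fixes V :: "'a set" and E :: "'a \<Rightarrow> 'a \<Rightarrow> bool" and k n :: nat
  assumes "graph V E" and "2 \<le> k" and "card V = n" and "min_degree_ge V E k"
  shows "TC k V E \<le> n - k + 1 \<and>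
    (TC k V E = n - k + 1 \<longleftrightarrow>
      (\<exists>(V' :: 'a set) E'. simple_graph V' E' \<and> card V' = n - k \<and>
         graph_iso V E (join_vertices k V') (join_edges k E')))"
proof -
  have sg: "simple_graph V E" using assms(1) by (simp add: graph_def)
  have nk: "k + 1 \<le> n" using n_ge[OF sg assms(4)] assms(3) by simp
  define S where "S = {card \<Omega> | \<Omega>. total_k_coalition_partition k V E \<Omega>}"
  have TCS: "TC k V E = Sup S" unfolding TC_def S_def ..
  have Sb: "\<forall>m\<in>S. m \<le> n - k + 1"
  proof
    fix m assume "m \<in> S"
    then obtain \<Omega> where "m = card \<Omega>" "total_k_coalition_partition k V E \<Omega>" unfolding S_def by blast
    thus "m \<le> n - k + 1" using bound[OF sg, of k \<Omega>] assms(2,3) by linarith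
  qed
  have finS: "finite S" using Sb finite_subset[of S "{..n - k + 1}"] by auto
  have le: "TC k V E \<le> n - k + 1"
  proof (cases "S = {}")
    case True thus ?thesis using TCS by simp
  next
    case False
    have "Sup S \<le> n - k + 1" by (rule cSup_least) (use False Sb in auto)
    thus ?thesis using TCS by simp
  qed
  have eq: "TC k V E = n - k + 1 \<longleftrightarrow> (\<exists>K. core V E k K)"
  proof
    assume a: "TC k V E = n - k + 1"
    hence "S \<noteq> {}" using TCS by auto
    hence "Sup S \<in> S" using finS by (simp add: Sup_nat_def)
    then obtain \<Omega> where "total_k_coalition_partition k V E \<Omega>" "card \<Omega> = n - k + 1"
      using a TCS unfolding S_def by auto
    thus "\<exists>K. core V E k K" using eq_core[OF sg assms(2,4)] nk assms(3) by auto
  next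
    assume "\<exists>K. core V E k K"
    then obtain K where K: "core V E k K" by blast
    obtain \<Omega> where "total_k_coalition_partition k V E \<Omega>" "card \<Omega> + k = card V + 1"
      using core_part[OF sg assms(2) K] nk assms(3) by auto
    hence "n - k + 1 \<in> S" unfolding S_def using assms(3) nk by force
    hence "n - k + 1 \<le> Sup S" using finS by (simp add: le_cSup_finite)
    thus "TC k V E = n - k + 1" using le TCS by simp
  qed
  have "(\<exists>K. core V E k K) \<longleftrightarrow> (\<exists>(V' :: 'a set) E'. simple_graph V' E' \<and> card V' = n - k \<and>
         graph_iso V E (join_vertices k V') (join_edges k E'))"
  proof
    assume "\<exists>K. core V E k K"
    then obtain K where K: "core V E k K" by blast
    have "k < card V" using nk assms(3) by simp
    from core_iso[OF sg K this]
    show "\<exists>(V' :: 'a set) E'. simple_graph V' E' \<and> card V' = n - k \<and>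
         graph_iso V E (join_vertices k V') (join_edges k E')"
      unfolding assms(3) .
  next
    assume "\<exists>(V' :: 'a set) E'. simple_graph V' E' \<and> card V' = n - k \<and>
         graph_iso V E (join_vertices k V') (join_edges k E')"
    thus "\<exists>K. core V E k K" using iso_core by blast
  qed
  thus ?thesis using le eq by blast
qed

end
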